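(* Let $\Pi_0$ be a group and $\Pi_1$, $M$ abelian $\Pi_0$-modules. Let $E$ be the crossed module with group part $\Pi_0$, module part $\Pi_1$ (with its given $\Pi_0$-action) and trivial structure morphism $\Pi_1\to\Pi_0$. Then $H^2(E,M)\cong\operatorname{Hom}_{\Pi_0}(\Pi_1,M)\oplus H^2(\Pi_0,M)$.
   Context: For a crossed module $V=(G_V,M_V,\mu)$ (left action ${}^gm$, $\mu({}^gm)=g\mu(m)g^{-1}$, ${}^{\mu(n)}m=nmn^{-1}$) with $\pi_0(V)=G_V/\mu(M_V)$ and an abelian $\pi_0(V)$-module $M$, $H^2(V,M)$ is the second cohomology of the complex $C^1(V,M)=\mathrm{Map}(G_V,M)\to C^2(V,M)=\mathrm{Map}(M_V\times G_V\times G_V,M)\to C^3(V,M)=\mathrm{Map}(M_V\times M_V\times G_V\times M_V\times G_V\times G_V,M)$ with $(dc)(m,h,g)=c(\mu(m)h)-c(hg)+\bar hc(g)$, $(dc)(p,n,k,m,h,g)=c(p,\mu(n)k,\mu(m)h)-c(pn,k,hg)+c(n\,{}^km,kh,g)-\bar kc(m,h,g)$, where $\bar g$ is the class of $g$ in $\pi_0(V)$. $H^2(\Pi_0,M)$ is ordinary group cohomology. *)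

theory Defs
  imports "HOL-Algebra.Algebra"
begin

text \<open>All groups are HOL-Algebra groups, written multiplicatively (also the abelian ones).\<close>

definition G_module ::
  "('g,'x) monoid_scheme \<Rightarrow> ('m,'y) monoid_scheme \<Rightarrow> ('g \<Rightarrow> 'm \<Rightarrow> 'm) \<Rightarrow> bool" where
  "G_module G M phi \<longleftrightarrow> group G \<and> comm_group M \<and>
     (\<forall>g\<in>carrier G. \<forall>m\<in>carrier M. phi g m \<in> carrier M) \<and>
     (\<forall>g\<in>carrier G. \<forall>m\<in>carrier M. \<forall>n\<in>carrier M.
         phi g (m \<otimes>\<^bsub>M\<^esub> n) = phi g m \<otimes>\<^bsub>M\<^esub> phi g n) \<and>
     (\<forall>m\<in>carrier M. phi \<one>\<^bsub>G\<^esub> m = m) \<and>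
     (\<forall>g\<in>carrier G. \<forall>h\<in>carrier G. \<forall>m\<in>carrier M.
         phi (g \<otimes>\<^bsub>G\<^esub> h) m = phi g (phi h m))"

definition cochains :: "'a set \<Rightarrow> ('m,'y) monoid_scheme \<Rightarrow> ('a \<Rightarrow> 'm) monoid" where
  "cochains A M = \<lparr>carrier = extensional A \<inter> (A \<rightarrow> carrier M),
     monoid.mult = (\<lambda>f f'. \<lambda>x\<in>A. f x \<otimes>\<^bsub>M\<^esub> f' x),
     one = (\<lambda>x\<in>A. \<one>\<^bsub>M\<^esub>)\<rparr>"

text \<open>Crossed module V = (G, P, mu) with action alpha of G on P; M is a pi_0(V)-module,
  given as a G-action phi on M (trivial on mu(P)), so that bar h acts as phi h.\<close>

definition xmod_d1 ::
  "('g,'x) monoid_scheme \<Rightarrow> ('p,'z) monoid_scheme \<Rightarrow> ('p \<Rightarrow> 'g) \<Rightarrow> ('m,'y) monoid_scheme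
   \<Rightarrow> ('g \<Rightarrow> 'm \<Rightarrow> 'm) \<Rightarrow> ('g \<Rightarrow> 'm) \<Rightarrow> ('p \<times> 'g \<times> 'g \<Rightarrow> 'm)" where
  "xmod_d1 G P mu M phi c = (\<lambda>(m,h,g) \<in> carrier P \<times> carrier G \<times> carrier G.
      c (mu m \<otimes>\<^bsub>G\<^esub> h) \<otimes>\<^bsub>M\<^esub> inv\<^bsub>M\<^esub> (c (h \<otimes>\<^bsub>G\<^esub> g)) \<otimes>\<^bsub>M\<^esub> phi h (c g))"

definition xmod_d2 ::
  "('g,'x) monoid_scheme \<Rightarrow> ('p,'z) monoid_scheme \<Rightarrow> ('p \<Rightarrow> 'g) \<Rightarrow> ('g \<Rightarrow> 'p \<Rightarrow> 'p)
   \<Rightarrow> ('m,'y) monoid_scheme \<Rightarrow> ('g \<Rightarrow> 'm \<Rightarrow> 'm) \<Rightarrow> ('p \<times> 'g \<times> 'g \<Rightarrow> 'm)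
   \<Rightarrow> ('p \<times> 'p \<times> 'g \<times> 'p \<times> 'g \<times> 'g \<Rightarrow> 'm)" where
  "xmod_d2 G P mu alpha M phi c =
     (\<lambda>(p,n,k,m,h,g) \<in> carrier P \<times> carrier P \<times> carrier G \<times> carrier P \<times> carrier G \<times> carrier G.
        c (p, mu n \<otimes>\<^bsub>G\<^esub> k, mu m \<otimes>\<^bsub>G\<^esub> h)
        \<otimes>\<^bsub>M\<^esub> inv\<^bsub>M\<^esub> (c (p \<otimes>\<^bsub>P\<^esub> n, k, h \<otimes>\<^bsub>G\<^esub> g))
        \<otimes>\<^bsub>M\<^esub> c (n \<otimes>\<^bsub>P\<^esub> alpha k m, k \<otimes>\<^bsub>G\<^esub> h, g)
        \<otimes>\<^bsub>M\<^esub> inv\<^bsub>M\<^esub> (phi k (c (m,h,g))))"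

definition xmod_C2 ::
  "('g,'x) monoid_scheme \<Rightarrow> ('p,'z) monoid_scheme \<Rightarrow> ('m,'y) monoid_scheme
   \<Rightarrow> ('p \<times> 'g \<times> 'g \<Rightarrow> 'm) monoid" where
  "xmod_C2 G P M = cochains (carrier P \<times> carrier G \<times> carrier G) M"

definition xmod_Z2 where
  "xmod_Z2 G P mu alpha M phi =
     {c \<in> carrier (xmod_C2 G P M).
        xmod_d2 G P mu alpha M phi c
          = \<one>\<^bsub>cochains (carrier P \<times> carrier P \<times> carrier G \<times> carrier P \<times> carrier G \<times> carrier G) M\<^esub>}"

definition xmod_B2 where
  "xmod_B2 G P mu M phi = xmod_d1 G P mu M phi ` carrier (cochains (carrier G) M)"

definition xmod_H2 ::
  "('g,'x) monoid_scheme \<Rightarrow> ('p,'z) monoid_scheme \<Rightarrow> ('p \<Rightarrow> 'g) \<Rightarrow> ('g \<Rightarrow> 'p \<Rightarrow> 'p)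
   \<Rightarrow> ('m,'y) monoid_scheme \<Rightarrow> ('g \<Rightarrow> 'm \<Rightarrow> 'm) \<Rightarrow> ('p \<times> 'g \<times> 'g \<Rightarrow> 'm) set monoid" where
  "xmod_H2 G P mu alpha M phi =
     ((xmod_C2 G P M)\<lparr>carrier := xmod_Z2 G P mu alpha M phi\<rparr>) Mod xmod_B2 G P mu M phi"

definition grp_d1 ::
  "('g,'x) monoid_scheme \<Rightarrow> ('m,'y) monoid_scheme \<Rightarrow> ('g \<Rightarrow> 'm \<Rightarrow> 'm)
   \<Rightarrow> ('g \<Rightarrow> 'm) \<Rightarrow> ('g \<times> 'g \<Rightarrow> 'm)" where
  "grp_d1 G M phi f = (\<lambda>(g,h) \<in> carrier G \<times> carrier G.
      phi g (f h) \<otimes>\<^bsub>M\<^esub> inv\<^bsub>M\<^esub> (f (g \<otimes>\<^bsub>G\<^esub> h)) \<otimes>\<^bsub>M\<^esub> f g)"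

definition grp_d2 ::
  "('g,'x) monoid_scheme \<Rightarrow> ('m,'y) monoid_scheme \<Rightarrow> ('g \<Rightarrow> 'm \<Rightarrow> 'm)
   \<Rightarrow> ('g \<times> 'g \<Rightarrow> 'm) \<Rightarrow> ('g \<times> 'g \<times> 'g \<Rightarrow> 'm)" where
  "grp_d2 G M phi c = (\<lambda>(g,h,k) \<in> carrier G \<times> carrier G \<times> carrier G.
      phi g (c (h,k)) \<otimes>\<^bsub>M\<^esub> inv\<^bsub>M\<^esub> (c (g \<otimes>\<^bsub>G\<^esub> h, k))
      \<otimes>\<^bsub>M\<^esub> c (g, h \<otimes>\<^bsub>G\<^esub> k) \<otimes>\<^bsub>M\<^esub> inv\<^bsub>M\<^esub> (c (g,h)))"

definition grp_H2 ::
  "('g,'x) monoid_scheme \<Rightarrow> ('m,'y) monoid_scheme \<Rightarrow> ('g \<Rightarrow> 'm \<Rightarrow> 'm)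
   \<Rightarrow> ('g \<times> 'g \<Rightarrow> 'm) set monoid" where
  "grp_H2 G M phi =
     ((cochains (carrier G \<times> carrier G) M)\<lparr>carrier :=
        {c \<in> carrier (cochains (carrier G \<times> carrier G) M).
           grp_d2 G M phi c = \<one>\<^bsub>cochains (carrier G \<times> carrier G \<times> carrier G) M\<^esub>}\<rparr>)
     Mod (grp_d1 G M phi ` carrier (cochains (carrier G) M))"

definition equiv_Hom ::
  "('g,'x) monoid_scheme \<Rightarrow> ('p,'z) monoid_scheme \<Rightarrow> ('g \<Rightarrow> 'p \<Rightarrow> 'p)
   \<Rightarrow> ('m,'y) monoid_scheme \<Rightarrow> ('g \<Rightarrow> 'm \<Rightarrow> 'm) \<Rightarrow> ('p \<Rightarrow> 'm) monoid" where
  "equiv_Hom G P alpha M phi = (cochains (carrier P) M)\<lparr>carrier :=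
     {f \<in> hom P M. f \<in> extensional (carrier P) \<and>
        (\<forall>g\<in>carrier G. \<forall>m\<in>carrier P. f (alpha g m) = phi g (f m))}\<rparr>"

end

theory Submission
  imports Defs
begin


lemma cochains_carrier:
  "f \<in> carrier (cochains A M) \<longleftrightarrow> f \<in> extensional A \<and> (\<forall>x\<in>A. f x \<in> carrier M)"
  by (auto simp: cochains_def)

lemma cochains_mult [simp]: "f \<otimes>\<^bsub>cochains A M\<^esub> f' = (\<lambda>x\<in>A. f x \<otimes>\<^bsub>M\<^esub> f' x)"
  by (simp add: cochains_def)

lemma cochains_one [simp]: "\<one>\<^bsub>cochains A M\<^esub> = (\<lambda>x\<in>A. \<one>\<^bsub>M\<^esub>)"
  by (simp add: cochains_def)

lemma cochains_comm_group:
  assumes "comm_group M" shows "comm_group (cochains A M)"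
proof -
  interpret M: comm_group M by fact
  show ?thesis
  proof (rule comm_groupI)
    fix x y z assume x: "x \<in> carrier (cochains A M)" and y: "y \<in> carrier (cochains A M)"
      and z: "z \<in> carrier (cochains A M)"
    show "x \<otimes>\<^bsub>cochains A M\<^esub> y \<in> carrier (cochains A M)" using x y by (auto simp: cochains_carrier)
    show "x \<otimes>\<^bsub>cochains A M\<^esub> y \<otimes>\<^bsub>cochains A M\<^esub> z = x \<otimes>\<^bsub>cochains A M\<^esub> (y \<otimes>\<^bsub>cochains A M\<^esub> z)"
      using x y z by (auto simp: cochains_carrier M.m_assoc intro!: restrict_ext)
    show "x \<otimes>\<^bsub>cochains A M\<^esub> y = y \<otimes>\<^bsub>cochains A M\<^esub> x"
      using x y by (auto simp: cochains_carrier M.m_comm intro!: restrict_ext)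
    show "\<one>\<^bsub>cochains A M\<^esub> \<otimes>\<^bsub>cochains A M\<^esub> x = x"
      using x by (intro extensionalityI[where A=A]) (auto simp: cochains_carrier)
    show "\<exists>y\<in>carrier (cochains A M). y \<otimes>\<^bsub>cochains A M\<^esub> x = \<one>\<^bsub>cochains A M\<^esub>"
      using x by (intro bexI[of _ "\<lambda>a\<in>A. inv\<^bsub>M\<^esub> x a"]) (auto simp: cochains_carrier)
  next
    show "\<one>\<^bsub>cochains A M\<^esub> \<in> carrier (cochains A M)" by (auto simp: cochains_carrier)
  qed
qed

lemma cochains_inv:
  assumes "comm_group M" "f \<in> carrier (cochains A M)"
  shows "inv\<^bsub>cochains A M\<^esub> f = (\<lambda>x\<in>A. inv\<^bsub>M\<^esub> f x)"
proof -
  interpret M: comm_group M by fact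
  interpret C: comm_group "cochains A M" by (rule cochains_comm_group) fact
  show ?thesis using assms(2)
    by (intro C.inv_equality) (auto simp: cochains_carrier)
qed

lemma (in comm_group) four:
  assumes "x1 \<in> carrier G" "x2 \<in> carrier G" "x3 \<in> carrier G" "x4 \<in> carrier G"
    "y1 \<in> carrier G" "y2 \<in> carrier G" "y3 \<in> carrier G" "y4 \<in> carrier G"
  shows "(x1 \<otimes> y1) \<otimes> inv (x2 \<otimes> y2) \<otimes> (x3 \<otimes> y3) \<otimes> inv (x4 \<otimes> y4)
    = (x1 \<otimes> inv x2 \<otimes> x3 \<otimes> inv x4) \<otimes> (y1 \<otimes> inv y2 \<otimes> y3 \<otimes> inv y4)"
  using assms by (simp add: inv_mult m_ac)

lemma (in comm_group) three:
  assumes "x1 \<in> carrier G" "x2 \<in> carrier G" "x3 \<in> carrier G"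
    "y1 \<in> carrier G" "y2 \<in> carrier G" "y3 \<in> carrier G"
  shows "(x1 \<otimes> y1) \<otimes> inv (x2 \<otimes> y2) \<otimes> (x3 \<otimes> y3)
    = (x1 \<otimes> inv x2 \<otimes> x3) \<otimes> (y1 \<otimes> inv y2 \<otimes> y3)"
  using assms by (simp add: inv_mult m_ac)

lemma (in comm_group) four_one:
  assumes "a \<in> carrier G" "b \<in> carrier G" "c \<in> carrier G" "d \<in> carrier G"
  shows "a \<otimes> inv b \<otimes> c \<otimes> inv d = \<one> \<longleftrightarrow> a \<otimes> c = b \<otimes> d"
proof -
  have "a \<otimes> inv b \<otimes> c \<otimes> inv d = (a \<otimes> c) \<otimes> inv (b \<otimes> d)"
    using assms by (simp add: inv_mult m_ac)
  also have "\<dots> = \<one> \<longleftrightarrow> a \<otimes> c = b \<otimes> d"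
    using assms by (metis inv_closed inv_equality m_closed r_inv)
  finally show ?thesis .
qed

lemma (in comm_group) canc_0_a_z:
  assumes "x \<in> carrier G" "z \<in> carrier G"
  shows "(x \<otimes> (inv x \<otimes> z)) = z"
  using assms by (simp add: m_assoc[symmetric])

lemma (in comm_group) canc_0_a_n:
  assumes "x \<in> carrier G"
  shows "(x \<otimes> (inv x)) = \<one>"
  using assms by (simp add: m_assoc[symmetric])

lemma (in comm_group) canc_0_b_z:
  assumes "x \<in> carrier G" "z \<in> carrier G"
  shows "(inv x \<otimes> (x \<otimes> z)) = z"
  using assms by (simp add: m_assoc[symmetric])

lemma (in comm_group) canc_0_b_n:
  assumes "x \<in> carrier G"
  shows "(inv x \<otimes> (x)) = \<one>"
  using assms by (simp add: m_assoc[symmetric])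

lemma (in comm_group) canc_1_a_z:
  assumes "x \<in> carrier G" "y1 \<in> carrier G" "z \<in> carrier G"
  shows "(x \<otimes> (y1 \<otimes> (inv x \<otimes> z))) = (y1 \<otimes> z)"
  using assms by (subst m_lcomm) (simp_all add: canc_0_a_z)

lemma (in comm_group) canc_1_a_n:
  assumes "x \<in> carrier G" "y1 \<in> carrier G"
  shows "(x \<otimes> (y1 \<otimes> (inv x))) = y1"
  using assms by (subst m_lcomm) (simp_all add: canc_0_a_n)

lemma (in comm_group) canc_1_b_z:
  assumes "x \<in> carrier G" "y1 \<in> carrier G" "z \<in> carrier G"
  shows "(inv x \<otimes> (y1 \<otimes> (x \<otimes> z))) = (y1 \<otimes> z)"
  using assms by (subst m_lcomm) (simp_all add: canc_0_b_z)

lemma (in comm_group) canc_1_b_n: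
  assumes "x \<in> carrier G" "y1 \<in> carrier G"
  shows "(inv x \<otimes> (y1 \<otimes> (x))) = y1"
  using assms by (subst m_lcomm) (simp_all add: canc_0_b_n)

lemma (in comm_group) canc_2_a_z:
  assumes "x \<in> carrier G" "y1 \<in> carrier G" "y2 \<in> carrier G" "z \<in> carrier G"
  shows "(x \<otimes> (y1 \<otimes> (y2 \<otimes> (inv x \<otimes> z)))) = (y1 \<otimes> (y2 \<otimes> z))"
  using assms by (subst m_lcomm) (simp_all add: canc_1_a_z)

lemma (in comm_group) canc_2_a_n:
  assumes "x \<in> carrier G" "y1 \<in> carrier G" "y2 \<in> carrier G"
  shows "(x \<otimes> (y1 \<otimes> (y2 \<otimes> (inv x)))) = (y1 \<otimes> y2)"
  using assms by (subst m_lcomm) (simp_all add: canc_1_a_n)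

lemma (in comm_group) canc_2_b_z:
  assumes "x \<in> carrier G" "y1 \<in> carrier G" "y2 \<in> carrier G" "z \<in> carrier G"
  shows "(inv x \<otimes> (y1 \<otimes> (y2 \<otimes> (x \<otimes> z)))) = (y1 \<otimes> (y2 \<otimes> z))"
  using assms by (subst m_lcomm) (simp_all add: canc_1_b_z)

lemma (in comm_group) canc_2_b_n:
  assumes "x \<in> carrier G" "y1 \<in> carrier G" "y2 \<in> carrier G"
  shows "(inv x \<otimes> (y1 \<otimes> (y2 \<otimes> (x)))) = (y1 \<otimes> y2)"
  using assms by (subst m_lcomm) (simp_all add: canc_1_b_n)

lemma (in comm_group) canc_3_a_z:
  assumes "x \<in> carrier G" "y1 \<in> carrier G" "y2 \<in> carrier G" "y3 \<in> carrier G" "z \<in> carrier G"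
  shows "(x \<otimes> (y1 \<otimes> (y2 \<otimes> (y3 \<otimes> (inv x \<otimes> z))))) = (y1 \<otimes> (y2 \<otimes> (y3 \<otimes> z)))"
  using assms by (subst m_lcomm) (simp_all add: canc_2_a_z)

lemma (in comm_group) canc_3_a_n:
  assumes "x \<in> carrier G" "y1 \<in> carrier G" "y2 \<in> carrier G" "y3 \<in> carrier G"
  shows "(x \<otimes> (y1 \<otimes> (y2 \<otimes> (y3 \<otimes> (inv x))))) = (y1 \<otimes> (y2 \<otimes> y3))"
  using assms by (subst m_lcomm) (simp_all add: canc_2_a_n)

lemma (in comm_group) canc_3_b_z:
  assumes "x \<in> carrier G" "y1 \<in> carrier G" "y2 \<in> carrier G" "y3 \<in> carrier G" "z \<in> carrier G"
  shows "(inv x \<otimes> (y1 \<otimes> (y2 \<otimes> (y3 \<otimes> (x \<otimes> z))))) = (y1 \<otimes> (y2 \<otimes> (y3 \<otimes> z)))"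
  using assms by (subst m_lcomm) (simp_all add: canc_2_b_z)

lemma (in comm_group) canc_3_b_n:
  assumes "x \<in> carrier G" "y1 \<in> carrier G" "y2 \<in> carrier G" "y3 \<in> carrier G"
  shows "(inv x \<otimes> (y1 \<otimes> (y2 \<otimes> (y3 \<otimes> (x))))) = (y1 \<otimes> (y2 \<otimes> y3))"
  using assms by (subst m_lcomm) (simp_all add: canc_2_b_n)

lemma (in comm_group) canc_4_a_z:
  assumes "x \<in> carrier G" "y1 \<in> carrier G" "y2 \<in> carrier G" "y3 \<in> carrier G" "y4 \<in> carrier G" "z \<in> carrier G"
  shows "(x \<otimes> (y1 \<otimes> (y2 \<otimes> (y3 \<otimes> (y4 \<otimes> (inv x \<otimes> z)))))) = (y1 \<otimes> (y2 \<otimes> (y3 \<otimes> (y4 \<otimes> z))))"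
  using assms by (subst m_lcomm) (simp_all add: canc_3_a_z)

lemma (in comm_group) canc_4_a_n:
  assumes "x \<in> carrier G" "y1 \<in> carrier G" "y2 \<in> carrier G" "y3 \<in> carrier G" "y4 \<in> carrier G"
  shows "(x \<otimes> (y1 \<otimes> (y2 \<otimes> (y3 \<otimes> (y4 \<otimes> (inv x)))))) = (y1 \<otimes> (y2 \<otimes> (y3 \<otimes> y4)))"
  using assms by (subst m_lcomm) (simp_all add: canc_3_a_n)

lemma (in comm_group) canc_4_b_z:
  assumes "x \<in> carrier G" "y1 \<in> carrier G" "y2 \<in> carrier G" "y3 \<in> carrier G" "y4 \<in> carrier G" "z \<in> carrier G"
  shows "(inv x \<otimes> (y1 \<otimes> (y2 \<otimes> (y3 \<otimes> (y4 \<otimes> (x \<otimes> z)))))) = (y1 \<otimes> (y2 \<otimes> (y3 \<otimes> (y4 \<otimes> z))))"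
  using assms by (subst m_lcomm) (simp_all add: canc_3_b_z)

lemma (in comm_group) canc_4_b_n:
  assumes "x \<in> carrier G" "y1 \<in> carrier G" "y2 \<in> carrier G" "y3 \<in> carrier G" "y4 \<in> carrier G"
  shows "(inv x \<otimes> (y1 \<otimes> (y2 \<otimes> (y3 \<otimes> (y4 \<otimes> (x)))))) = (y1 \<otimes> (y2 \<otimes> (y3 \<otimes> y4)))"
  using assms by (subst m_lcomm) (simp_all add: canc_3_b_n)

lemma (in comm_group) canc_5_a_z:
  assumes "x \<in> carrier G" "y1 \<in> carrier G" "y2 \<in> carrier G" "y3 \<in> carrier G" "y4 \<in> carrier G" "y5 \<in> carrier G" "z \<in> carrier G"
  shows "(x \<otimes> (y1 \<otimes> (y2 \<otimes> (y3 \<otimes> (y4 \<otimes> (y5 \<otimes> (inv x \<otimes> z))))))) = (y1 \<otimes> (y2 \<otimes> (y3 \<otimes> (y4 \<otimes> (y5 \<otimes> z)))))"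
  using assms by (subst m_lcomm) (simp_all add: canc_4_a_z)

lemma (in comm_group) canc_5_a_n:
  assumes "x \<in> carrier G" "y1 \<in> carrier G" "y2 \<in> carrier G" "y3 \<in> carrier G" "y4 \<in> carrier G" "y5 \<in> carrier G"
  shows "(x \<otimes> (y1 \<otimes> (y2 \<otimes> (y3 \<otimes> (y4 \<otimes> (y5 \<otimes> (inv x))))))) = (y1 \<otimes> (y2 \<otimes> (y3 \<otimes> (y4 \<otimes> y5))))"
  using assms by (subst m_lcomm) (simp_all add: canc_4_a_n)

lemma (in comm_group) canc_5_b_z:
  assumes "x \<in> carrier G" "y1 \<in> carrier G" "y2 \<in> carrier G" "y3 \<in> carrier G" "y4 \<in> carrier G" "y5 \<in> carrier G" "z \<in> carrier G"
  shows "(inv x \<otimes> (y1 \<otimes> (y2 \<otimes> (y3 \<otimes> (y4 \<otimes> (y5 \<otimes> (x \<otimes> z))))))) = (y1 \<otimes> (y2 \<otimes> (y3 \<otimes> (y4 \<otimes> (y5 \<otimes> z)))))"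
  using assms by (subst m_lcomm) (simp_all add: canc_4_b_z)

lemma (in comm_group) canc_5_b_n:
  assumes "x \<in> carrier G" "y1 \<in> carrier G" "y2 \<in> carrier G" "y3 \<in> carrier G" "y4 \<in> carrier G" "y5 \<in> carrier G"
  shows "(inv x \<otimes> (y1 \<otimes> (y2 \<otimes> (y3 \<otimes> (y4 \<otimes> (y5 \<otimes> (x))))))) = (y1 \<otimes> (y2 \<otimes> (y3 \<otimes> (y4 \<otimes> y5))))"
  using assms by (subst m_lcomm) (simp_all add: canc_4_b_n)

lemma (in comm_group) canc_6_a_z:
  assumes "x \<in> carrier G" "y1 \<in> carrier G" "y2 \<in> carrier G" "y3 \<in> carrier G" "y4 \<in> carrier G" "y5 \<in> carrier G" "y6 \<in> carrier G" "z \<in> carrier G"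
  shows "(x \<otimes> (y1 \<otimes> (y2 \<otimes> (y3 \<otimes> (y4 \<otimes> (y5 \<otimes> (y6 \<otimes> (inv x \<otimes> z)))))))) = (y1 \<otimes> (y2 \<otimes> (y3 \<otimes> (y4 \<otimes> (y5 \<otimes> (y6 \<otimes> z))))))"
  using assms by (subst m_lcomm) (simp_all add: canc_5_a_z)

lemma (in comm_group) canc_6_a_n:
  assumes "x \<in> carrier G" "y1 \<in> carrier G" "y2 \<in> carrier G" "y3 \<in> carrier G" "y4 \<in> carrier G" "y5 \<in> carrier G" "y6 \<in> carrier G"
  shows "(x \<otimes> (y1 \<otimes> (y2 \<otimes> (y3 \<otimes> (y4 \<otimes> (y5 \<otimes> (y6 \<otimes> (inv x)))))))) = (y1 \<otimes> (y2 \<otimes> (y3 \<otimes> (y4 \<otimes> (y5 \<otimes> y6)))))"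
  using assms by (subst m_lcomm) (simp_all add: canc_5_a_n)

lemma (in comm_group) canc_6_b_z:
  assumes "x \<in> carrier G" "y1 \<in> carrier G" "y2 \<in> carrier G" "y3 \<in> carrier G" "y4 \<in> carrier G" "y5 \<in> carrier G" "y6 \<in> carrier G" "z \<in> carrier G"
  shows "(inv x \<otimes> (y1 \<otimes> (y2 \<otimes> (y3 \<otimes> (y4 \<otimes> (y5 \<otimes> (y6 \<otimes> (x \<otimes> z)))))))) = (y1 \<otimes> (y2 \<otimes> (y3 \<otimes> (y4 \<otimes> (y5 \<otimes> (y6 \<otimes> z))))))"
  using assms by (subst m_lcomm) (simp_all add: canc_5_b_z)

lemma (in comm_group) canc_6_b_n:
  assumes "x \<in> carrier G" "y1 \<in> carrier G" "y2 \<in> carrier G" "y3 \<in> carrier G" "y4 \<in> carrier G" "y5 \<in> carrier G" "y6 \<in> carrier G"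
  shows "(inv x \<otimes> (y1 \<otimes> (y2 \<otimes> (y3 \<otimes> (y4 \<otimes> (y5 \<otimes> (y6 \<otimes> (x)))))))) = (y1 \<otimes> (y2 \<otimes> (y3 \<otimes> (y4 \<otimes> (y5 \<otimes> y6)))))"
  using assms by (subst m_lcomm) (simp_all add: canc_5_b_n)

lemma (in comm_group) canc_7_a_z:
  assumes "x \<in> carrier G" "y1 \<in> carrier G" "y2 \<in> carrier G" "y3 \<in> carrier G" "y4 \<in> carrier G" "y5 \<in> carrier G" "y6 \<in> carrier G" "y7 \<in> carrier G" "z \<in> carrier G"
  shows "(x \<otimes> (y1 \<otimes> (y2 \<otimes> (y3 \<otimes> (y4 \<otimes> (y5 \<otimes> (y6 \<otimes> (y7 \<otimes> (inv x \<otimes> z))))))))) = (y1 \<otimes> (y2 \<otimes> (y3 \<otimes> (y4 \<otimes> (y5 \<otimes> (y6 \<otimes> (y7 \<otimes> z)))))))"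
  using assms by (subst m_lcomm) (simp_all add: canc_6_a_z)

lemma (in comm_group) canc_7_a_n:
  assumes "x \<in> carrier G" "y1 \<in> carrier G" "y2 \<in> carrier G" "y3 \<in> carrier G" "y4 \<in> carrier G" "y5 \<in> carrier G" "y6 \<in> carrier G" "y7 \<in> carrier G"
  shows "(x \<otimes> (y1 \<otimes> (y2 \<otimes> (y3 \<otimes> (y4 \<otimes> (y5 \<otimes> (y6 \<otimes> (y7 \<otimes> (inv x))))))))) = (y1 \<otimes> (y2 \<otimes> (y3 \<otimes> (y4 \<otimes> (y5 \<otimes> (y6 \<otimes> y7))))))"
  using assms by (subst m_lcomm) (simp_all add: canc_6_a_n)

lemma (in comm_group) canc_7_b_z:
  assumes "x \<in> carrier G" "y1 \<in> carrier G" "y2 \<in> carrier G" "y3 \<in> carrier G" "y4 \<in> carrier G" "y5 \<in> carrier G" "y6 \<in> carrier G" "y7 \<in> carrier G" "z \<in> carrier G"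
  shows "(inv x \<otimes> (y1 \<otimes> (y2 \<otimes> (y3 \<otimes> (y4 \<otimes> (y5 \<otimes> (y6 \<otimes> (y7 \<otimes> (x \<otimes> z))))))))) = (y1 \<otimes> (y2 \<otimes> (y3 \<otimes> (y4 \<otimes> (y5 \<otimes> (y6 \<otimes> (y7 \<otimes> z)))))))"
  using assms by (subst m_lcomm) (simp_all add: canc_6_b_z)

lemma (in comm_group) canc_7_b_n:
  assumes "x \<in> carrier G" "y1 \<in> carrier G" "y2 \<in> carrier G" "y3 \<in> carrier G" "y4 \<in> carrier G" "y5 \<in> carrier G" "y6 \<in> carrier G" "y7 \<in> carrier G"
  shows "(inv x \<otimes> (y1 \<otimes> (y2 \<otimes> (y3 \<otimes> (y4 \<otimes> (y5 \<otimes> (y6 \<otimes> (y7 \<otimes> (x))))))))) = (y1 \<otimes> (y2 \<otimes> (y3 \<otimes> (y4 \<otimes> (y5 \<otimes> (y6 \<otimes> y7))))))"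
  using assms by (subst m_lcomm) (simp_all add: canc_6_b_n)

lemma (in comm_group) canc_8_a_z:
  assumes "x \<in> carrier G" "y1 \<in> carrier G" "y2 \<in> carrier G" "y3 \<in> carrier G" "y4 \<in> carrier G" "y5 \<in> carrier G" "y6 \<in> carrier G" "y7 \<in> carrier G" "y8 \<in> carrier G" "z \<in> carrier G"
  shows "(x \<otimes> (y1 \<otimes> (y2 \<otimes> (y3 \<otimes> (y4 \<otimes> (y5 \<otimes> (y6 \<otimes> (y7 \<otimes> (y8 \<otimes> (inv x \<otimes> z)))))))))) = (y1 \<otimes> (y2 \<otimes> (y3 \<otimes> (y4 \<otimes> (y5 \<otimes> (y6 \<otimes> (y7 \<otimes> (y8 \<otimes> z))))))))"
  using assms by (subst m_lcomm) (simp_all add: canc_7_a_z)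

lemma (in comm_group) canc_8_a_n:
  assumes "x \<in> carrier G" "y1 \<in> carrier G" "y2 \<in> carrier G" "y3 \<in> carrier G" "y4 \<in> carrier G" "y5 \<in> carrier G" "y6 \<in> carrier G" "y7 \<in> carrier G" "y8 \<in> carrier G"
  shows "(x \<otimes> (y1 \<otimes> (y2 \<otimes> (y3 \<otimes> (y4 \<otimes> (y5 \<otimes> (y6 \<otimes> (y7 \<otimes> (y8 \<otimes> (inv x)))))))))) = (y1 \<otimes> (y2 \<otimes> (y3 \<otimes> (y4 \<otimes> (y5 \<otimes> (y6 \<otimes> (y7 \<otimes> y8)))))))"
  using assms by (subst m_lcomm) (simp_all add: canc_7_a_n)

lemma (in comm_group) canc_8_b_z:
  assumes "x \<in> carrier G" "y1 \<in> carrier G" "y2 \<in> carrier G" "y3 \<in> carrier G" "y4 \<in> carrier G" "y5 \<in> carrier G" "y6 \<in> carrier G" "y7 \<in> carrier G" "y8 \<in> carrier G" "z \<in> carrier G"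
  shows "(inv x \<otimes> (y1 \<otimes> (y2 \<otimes> (y3 \<otimes> (y4 \<otimes> (y5 \<otimes> (y6 \<otimes> (y7 \<otimes> (y8 \<otimes> (x \<otimes> z)))))))))) = (y1 \<otimes> (y2 \<otimes> (y3 \<otimes> (y4 \<otimes> (y5 \<otimes> (y6 \<otimes> (y7 \<otimes> (y8 \<otimes> z))))))))"
  using assms by (subst m_lcomm) (simp_all add: canc_7_b_z)

lemma (in comm_group) canc_8_b_n:
  assumes "x \<in> carrier G" "y1 \<in> carrier G" "y2 \<in> carrier G" "y3 \<in> carrier G" "y4 \<in> carrier G" "y5 \<in> carrier G" "y6 \<in> carrier G" "y7 \<in> carrier G" "y8 \<in> carrier G"
  shows "(inv x \<otimes> (y1 \<otimes> (y2 \<otimes> (y3 \<otimes> (y4 \<otimes> (y5 \<otimes> (y6 \<otimes> (y7 \<otimes> (y8 \<otimes> (x)))))))))) = (y1 \<otimes> (y2 \<otimes> (y3 \<otimes> (y4 \<otimes> (y5 \<otimes> (y6 \<otimes> (y7 \<otimes> y8)))))))"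
  using assms by (subst m_lcomm) (simp_all add: canc_7_b_n)

lemma (in comm_group) canc_9_a_z:
  assumes "x \<in> carrier G" "y1 \<in> carrier G" "y2 \<in> carrier G" "y3 \<in> carrier G" "y4 \<in> carrier G" "y5 \<in> carrier G" "y6 \<in> carrier G" "y7 \<in> carrier G" "y8 \<in> carrier G" "y9 \<in> carrier G" "z \<in> carrier G"
  shows "(x \<otimes> (y1 \<otimes> (y2 \<otimes> (y3 \<otimes> (y4 \<otimes> (y5 \<otimes> (y6 \<otimes> (y7 \<otimes> (y8 \<otimes> (y9 \<otimes> (inv x \<otimes> z))))))))))) = (y1 \<otimes> (y2 \<otimes> (y3 \<otimes> (y4 \<otimes> (y5 \<otimes> (y6 \<otimes> (y7 \<otimes> (y8 \<otimes> (y9 \<otimes> z)))))))))"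
  using assms by (subst m_lcomm) (simp_all add: canc_8_a_z)

lemma (in comm_group) canc_9_a_n:
  assumes "x \<in> carrier G" "y1 \<in> carrier G" "y2 \<in> carrier G" "y3 \<in> carrier G" "y4 \<in> carrier G" "y5 \<in> carrier G" "y6 \<in> carrier G" "y7 \<in> carrier G" "y8 \<in> carrier G" "y9 \<in> carrier G"
  shows "(x \<otimes> (y1 \<otimes> (y2 \<otimes> (y3 \<otimes> (y4 \<otimes> (y5 \<otimes> (y6 \<otimes> (y7 \<otimes> (y8 \<otimes> (y9 \<otimes> (inv x))))))))))) = (y1 \<otimes> (y2 \<otimes> (y3 \<otimes> (y4 \<otimes> (y5 \<otimes> (y6 \<otimes> (y7 \<otimes> (y8 \<otimes> y9))))))))"
  using assms by (subst m_lcomm) (simp_all add: canc_8_a_n)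

lemma (in comm_group) canc_9_b_z:
  assumes "x \<in> carrier G" "y1 \<in> carrier G" "y2 \<in> carrier G" "y3 \<in> carrier G" "y4 \<in> carrier G" "y5 \<in> carrier G" "y6 \<in> carrier G" "y7 \<in> carrier G" "y8 \<in> carrier G" "y9 \<in> carrier G" "z \<in> carrier G"
  shows "(inv x \<otimes> (y1 \<otimes> (y2 \<otimes> (y3 \<otimes> (y4 \<otimes> (y5 \<otimes> (y6 \<otimes> (y7 \<otimes> (y8 \<otimes> (y9 \<otimes> (x \<otimes> z))))))))))) = (y1 \<otimes> (y2 \<otimes> (y3 \<otimes> (y4 \<otimes> (y5 \<otimes> (y6 \<otimes> (y7 \<otimes> (y8 \<otimes> (y9 \<otimes> z)))))))))"
  using assms by (subst m_lcomm) (simp_all add: canc_8_b_z)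

lemma (in comm_group) canc_9_b_n:
  assumes "x \<in> carrier G" "y1 \<in> carrier G" "y2 \<in> carrier G" "y3 \<in> carrier G" "y4 \<in> carrier G" "y5 \<in> carrier G" "y6 \<in> carrier G" "y7 \<in> carrier G" "y8 \<in> carrier G" "y9 \<in> carrier G"
  shows "(inv x \<otimes> (y1 \<otimes> (y2 \<otimes> (y3 \<otimes> (y4 \<otimes> (y5 \<otimes> (y6 \<otimes> (y7 \<otimes> (y8 \<otimes> (y9 \<otimes> (x))))))))))) = (y1 \<otimes> (y2 \<otimes> (y3 \<otimes> (y4 \<otimes> (y5 \<otimes> (y6 \<otimes> (y7 \<otimes> (y8 \<otimes> y9))))))))"
  using assms by (subst m_lcomm) (simp_all add: canc_8_b_n)

lemma (in comm_group) canc_10_a_z: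
  assumes "x \<in> carrier G" "y1 \<in> carrier G" "y2 \<in> carrier G" "y3 \<in> carrier G" "y4 \<in> carrier G" "y5 \<in> carrier G" "y6 \<in> carrier G" "y7 \<in> carrier G" "y8 \<in> carrier G" "y9 \<in> carrier G" "y10 \<in> carrier G" "z \<in> carrier G"
  shows "(x \<otimes> (y1 \<otimes> (y2 \<otimes> (y3 \<otimes> (y4 \<otimes> (y5 \<otimes> (y6 \<otimes> (y7 \<otimes> (y8 \<otimes> (y9 \<otimes> (y10 \<otimes> (inv x \<otimes> z)))))))))))) = (y1 \<otimes> (y2 \<otimes> (y3 \<otimes> (y4 \<otimes> (y5 \<otimes> (y6 \<otimes> (y7 \<otimes> (y8 \<otimes> (y9 \<otimes> (y10 \<otimes> z))))))))))"
  using assms by (subst m_lcomm) (simp_all add: canc_9_a_z)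

lemma (in comm_group) canc_10_a_n:
  assumes "x \<in> carrier G" "y1 \<in> carrier G" "y2 \<in> carrier G" "y3 \<in> carrier G" "y4 \<in> carrier G" "y5 \<in> carrier G" "y6 \<in> carrier G" "y7 \<in> carrier G" "y8 \<in> carrier G" "y9 \<in> carrier G" "y10 \<in> carrier G"
  shows "(x \<otimes> (y1 \<otimes> (y2 \<otimes> (y3 \<otimes> (y4 \<otimes> (y5 \<otimes> (y6 \<otimes> (y7 \<otimes> (y8 \<otimes> (y9 \<otimes> (y10 \<otimes> (inv x)))))))))))) = (y1 \<otimes> (y2 \<otimes> (y3 \<otimes> (y4 \<otimes> (y5 \<otimes> (y6 \<otimes> (y7 \<otimes> (y8 \<otimes> (y9 \<otimes> y10)))))))))"
  using assms by (subst m_lcomm) (simp_all add: canc_9_a_n)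

lemma (in comm_group) canc_10_b_z:
  assumes "x \<in> carrier G" "y1 \<in> carrier G" "y2 \<in> carrier G" "y3 \<in> carrier G" "y4 \<in> carrier G" "y5 \<in> carrier G" "y6 \<in> carrier G" "y7 \<in> carrier G" "y8 \<in> carrier G" "y9 \<in> carrier G" "y10 \<in> carrier G" "z \<in> carrier G"
  shows "(inv x \<otimes> (y1 \<otimes> (y2 \<otimes> (y3 \<otimes> (y4 \<otimes> (y5 \<otimes> (y6 \<otimes> (y7 \<otimes> (y8 \<otimes> (y9 \<otimes> (y10 \<otimes> (x \<otimes> z)))))))))))) = (y1 \<otimes> (y2 \<otimes> (y3 \<otimes> (y4 \<otimes> (y5 \<otimes> (y6 \<otimes> (y7 \<otimes> (y8 \<otimes> (y9 \<otimes> (y10 \<otimes> z))))))))))"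
  using assms by (subst m_lcomm) (simp_all add: canc_9_b_z)

lemma (in comm_group) canc_10_b_n:
  assumes "x \<in> carrier G" "y1 \<in> carrier G" "y2 \<in> carrier G" "y3 \<in> carrier G" "y4 \<in> carrier G" "y5 \<in> carrier G" "y6 \<in> carrier G" "y7 \<in> carrier G" "y8 \<in> carrier G" "y9 \<in> carrier G" "y10 \<in> carrier G"
  shows "(inv x \<otimes> (y1 \<otimes> (y2 \<otimes> (y3 \<otimes> (y4 \<otimes> (y5 \<otimes> (y6 \<otimes> (y7 \<otimes> (y8 \<otimes> (y9 \<otimes> (y10 \<otimes> (x)))))))))))) = (y1 \<otimes> (y2 \<otimes> (y3 \<otimes> (y4 \<otimes> (y5 \<otimes> (y6 \<otimes> (y7 \<otimes> (y8 \<otimes> (y9 \<otimes> y10)))))))))"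
  using assms by (subst m_lcomm) (simp_all add: canc_9_b_n)

lemmas (in comm_group) canc = canc_0_a_z canc_0_a_n canc_0_b_z canc_0_b_n canc_1_a_z canc_1_a_n canc_1_b_z canc_1_b_n canc_2_a_z canc_2_a_n canc_2_b_z canc_2_b_n canc_3_a_z canc_3_a_n canc_3_b_z canc_3_b_n canc_4_a_z canc_4_a_n canc_4_b_z canc_4_b_n canc_5_a_z canc_5_a_n canc_5_b_z canc_5_b_n canc_6_a_z canc_6_a_n canc_6_b_z canc_6_b_n canc_7_a_z canc_7_a_n canc_7_b_z canc_7_b_n canc_8_a_z canc_8_a_n canc_8_b_z canc_8_b_n canc_9_a_z canc_9_a_n canc_9_b_z canc_9_b_n canc_10_a_z canc_10_a_n canc_10_b_z canc_10_b_n


lemma (in comm_group) sol: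
  assumes "a \<otimes> b = c \<otimes> d" "a \<in> carrier G" "b \<in> carrier G" "c \<in> carrier G" "d \<in> carrier G"
  shows "c = a \<otimes> b \<otimes> inv d"
proof -
  have "c = (c \<otimes> d) \<otimes> inv d" using assms(2-) by (simp add: m_assoc)
  then show ?thesis using assms(1) by simp
qed

lemma ext_eq_iff: "f \<in> extensional A \<Longrightarrow> g \<in> extensional A \<Longrightarrow> f = g \<longleftrightarrow> (\<forall>x\<in>A. f x = g x)"
  by (auto intro: extensionalityI)



locale thm_ctx = G: group G + P: comm_group P + M: comm_group M
  for G :: "('g,'x) monoid_scheme" and P :: "('p,'z) monoid_scheme" and M :: "('m,'y) monoid_scheme" +
  fixes alpha :: "'g \<Rightarrow> 'p \<Rightarrow> 'p" and phi :: "'g \<Rightarrow> 'm \<Rightarrow> 'm"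
  assumes GP: "G_module G P alpha" and GM: "G_module G M phi"
begin

lemma phi_closed [simp,intro]: "g \<in> carrier G \<Longrightarrow> m \<in> carrier M \<Longrightarrow> phi g m \<in> carrier M"
  using GM by (auto simp: G_module_def)
lemma phi_mult: "g \<in> carrier G \<Longrightarrow> m \<in> carrier M \<Longrightarrow> n \<in> carrier M \<Longrightarrow>
   phi g (m \<otimes>\<^bsub>M\<^esub> n) = phi g m \<otimes>\<^bsub>M\<^esub> phi g n"
  using GM by (auto simp: G_module_def)
lemma phi_1 [simp]: "m \<in> carrier M \<Longrightarrow> phi \<one>\<^bsub>G\<^esub> m = m"
  using GM by (auto simp: G_module_def)
lemma phi_comp: "g \<in> carrier G \<Longrightarrow> h \<in> carrier G \<Longrightarrow> m \<in> carrier M \<Longrightarrow>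
   phi (g \<otimes>\<^bsub>G\<^esub> h) m = phi g (phi h m)"
  using GM by (auto simp: G_module_def)
lemma phi_hom: "g \<in> carrier G \<Longrightarrow> group_hom M M (phi g)"
  by (auto simp: group_hom_def group_hom_axioms_def hom_def phi_mult M.group_axioms)
lemma phi_inv [simp]: "g \<in> carrier G \<Longrightarrow> m \<in> carrier M \<Longrightarrow> phi g (inv\<^bsub>M\<^esub> m) = inv\<^bsub>M\<^esub> (phi g m)"
  using group_hom.hom_inv[OF phi_hom] by blast
lemma phi_one [simp]: "g \<in> carrier G \<Longrightarrow> phi g \<one>\<^bsub>M\<^esub> = \<one>\<^bsub>M\<^esub>"
  using group_hom.hom_one[OF phi_hom] by blast

lemma alpha_closed [simp,intro]: "g \<in> carrier G \<Longrightarrow> m \<in> carrier P \<Longrightarrow> alpha g m \<in> carrier P"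
  using GP by (auto simp: G_module_def)
lemma alpha_mult: "g \<in> carrier G \<Longrightarrow> m \<in> carrier P \<Longrightarrow> n \<in> carrier P \<Longrightarrow>
   alpha g (m \<otimes>\<^bsub>P\<^esub> n) = alpha g m \<otimes>\<^bsub>P\<^esub> alpha g n"
  using GP by (auto simp: G_module_def)
lemma alpha_1 [simp]: "m \<in> carrier P \<Longrightarrow> alpha \<one>\<^bsub>G\<^esub> m = m"
  using GP by (auto simp: G_module_def)
lemma alpha_hom: "g \<in> carrier G \<Longrightarrow> group_hom P P (alpha g)"
  by (auto simp: group_hom_def group_hom_axioms_def hom_def alpha_mult P.group_axioms)
lemma alpha_one [simp]: "g \<in> carrier G \<Longrightarrow> alpha g \<one>\<^bsub>P\<^esub> = \<one>\<^bsub>P\<^esub>"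
  using group_hom.hom_one[OF alpha_hom] by blast

abbreviation "C1 \<equiv> cochains (carrier G) M"
abbreviation "D3 \<equiv> carrier P \<times> carrier G \<times> carrier G"
abbreviation "D6 \<equiv> carrier P \<times> carrier P \<times> carrier G \<times> carrier P \<times> carrier G \<times> carrier G"
abbreviation "C2 \<equiv> cochains D3 M"
abbreviation "C6 \<equiv> cochains D6 M"
abbreviation "G2 \<equiv> cochains (carrier G \<times> carrier G) M"
abbreviation "G3 \<equiv> cochains (carrier G \<times> carrier G \<times> carrier G) M"
abbreviation "mu0 \<equiv> (\<lambda>_::'p. \<one>\<^bsub>G\<^esub>)"

lemma cg: "comm_group (cochains A M)" by (rule cochains_comm_group) (rule M.comm_group_axioms)

lemma grp_d1_hom: "grp_d1 G M phi \<in> hom C1 G2"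
proof -
  have c: "grp_d1 G M phi f \<in> carrier G2" if "f \<in> carrier C1" for f
    using that by (auto simp: grp_d1_def cochains_carrier)
  show ?thesis
    unfolding hom_def
  proof (safe intro!: c)
    fix f f' assume f: "f \<in> carrier C1" and f': "f' \<in> carrier C1"
    show "grp_d1 G M phi (f \<otimes>\<^bsub>C1\<^esub> f') = grp_d1 G M phi f \<otimes>\<^bsub>G2\<^esub> grp_d1 G M phi f'"
      using f f' by (intro extensionalityI[where A="carrier G \<times> carrier G"])
        (auto simp: grp_d1_def cochains_carrier phi_mult M.three)
  qed
qed

lemma grp_d2_hom: "grp_d2 G M phi \<in> hom G2 G3"
proof -
  have c: "grp_d2 G M phi f \<in> carrier G3" if "f \<in> carrier G2" for f
    using that by (auto simp: grp_d2_def cochains_carrier)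
  show ?thesis
    unfolding hom_def
  proof (safe intro!: c)
    fix f f' assume f: "f \<in> carrier G2" and f': "f' \<in> carrier G2"
    show "grp_d2 G M phi (f \<otimes>\<^bsub>G2\<^esub> f') = grp_d2 G M phi f \<otimes>\<^bsub>G3\<^esub> grp_d2 G M phi f'"
      using f f' by (intro extensionalityI[where A="carrier G \<times> carrier G \<times> carrier G"])
        (auto simp: grp_d2_def cochains_carrier phi_mult M.four)
  qed
qed

lemma xmod_d1_hom: "xmod_d1 G P mu0 M phi \<in> hom C1 C2"
proof -
  have c: "xmod_d1 G P mu0 M phi f \<in> carrier C2" if "f \<in> carrier C1" for f
    using that by (auto simp: xmod_d1_def cochains_carrier)
  show ?thesis
    unfolding hom_def
  proof (safe intro!: c)
    fix f f' assume f: "f \<in> carrier C1" and f': "f' \<in> carrier C1"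
    show "xmod_d1 G P mu0 M phi (f \<otimes>\<^bsub>C1\<^esub> f') = xmod_d1 G P mu0 M phi f \<otimes>\<^bsub>C2\<^esub> xmod_d1 G P mu0 M phi f'"
      using f f' by (intro extensionalityI[where A=D3])
        (auto simp: xmod_d1_def cochains_carrier phi_mult M.three)
  qed
qed

lemma xmod_d2_hom: "xmod_d2 G P mu0 alpha M phi \<in> hom C2 C6"
proof -
  have c: "xmod_d2 G P mu0 alpha M phi f \<in> carrier C6" if "f \<in> carrier C2" for f
    using that by (auto simp: xmod_d2_def cochains_carrier)
  show ?thesis
    unfolding hom_def
  proof (safe intro!: c)
    fix f f' assume f: "f \<in> carrier C2" and f': "f' \<in> carrier C2"
    show "xmod_d2 G P mu0 alpha M phi (f \<otimes>\<^bsub>C2\<^esub> f') = xmod_d2 G P mu0 alpha M phi f \<otimes>\<^bsub>C6\<^esub> xmod_d2 G P mu0 alpha M phi f'"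
      using f f' by (intro extensionalityI[where A=D6])
        (auto simp: xmod_d2_def cochains_carrier phi_mult M.four)
  qed
qed

end

context thm_ctx begin

lemma dd_grp: assumes b: "b \<in> carrier C1"
  shows "grp_d2 G M phi (grp_d1 G M phi b) = \<one>\<^bsub>G3\<^esub>"
proof (intro extensionalityI[where A="carrier G \<times> carrier G \<times> carrier G"])
  fix x assume x: "x \<in> carrier G \<times> carrier G \<times> carrier G"
  then obtain g h k where [simp]: "x = (g,h,k)" and g: "g \<in> carrier G" and h: "h \<in> carrier G" and k: "k \<in> carrier G" by auto
  have bc: "\<And>y. y \<in> carrier G \<Longrightarrow> b y \<in> carrier M" using b by (auto simp: cochains_carrier)
  show "grp_d2 G M phi (grp_d1 G M phi b) x = \<one>\<^bsub>G3\<^esub> x"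
    using g h k bc
    by (simp add: grp_d2_def grp_d1_def phi_mult phi_comp[symmetric] G.m_assoc M.inv_mult M.m_ac M.canc)
qed (auto simp: grp_d2_def)

end

context thm_ctx begin

definition "phiOf c = (\<lambda>p\<in>carrier P. c (p, \<one>\<^bsub>G\<^esub>, \<one>\<^bsub>G\<^esub>) \<otimes>\<^bsub>M\<^esub> inv\<^bsub>M\<^esub> (c (\<one>\<^bsub>P\<^esub>, \<one>\<^bsub>G\<^esub>, \<one>\<^bsub>G\<^esub>)))"
definition "fOf c = (\<lambda>(k,h)\<in>carrier G \<times> carrier G. c (\<one>\<^bsub>P\<^esub>, k, h))"
definition "rep \<phi> f = (\<lambda>(m,h,g)\<in>D3. f (h,g) \<otimes>\<^bsub>M\<^esub> \<phi> m)"

abbreviation "Z2 \<equiv> xmod_Z2 G P mu0 alpha M phi"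
abbreviation "Z2G \<equiv> {c \<in> carrier G2. grp_d2 G M phi c = \<one>\<^bsub>G3\<^esub>}"
abbreviation "EH \<equiv> equiv_Hom G P alpha M phi"

lemma EH_carrier: "f \<in> carrier EH \<longleftrightarrow> f \<in> hom P M \<and> f \<in> extensional (carrier P) \<and>
        (\<forall>g\<in>carrier G. \<forall>m\<in>carrier P. f (alpha g m) = phi g (f m))"
  by (simp add: equiv_Hom_def)

lemma Z2G_char: "c \<in> Z2G \<longleftrightarrow> c \<in> carrier G2 \<and> (\<forall>k\<in>carrier G. \<forall>h\<in>carrier G. \<forall>g\<in>carrier G.
   c (k,h) \<otimes>\<^bsub>M\<^esub> c (k \<otimes>\<^bsub>G\<^esub> h, g) = c (k, h \<otimes>\<^bsub>G\<^esub> g) \<otimes>\<^bsub>M\<^esub> phi k (c (h,g)))"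
proof -
  { assume c: "c \<in> carrier G2"
    then have cc: "\<And>x y. x \<in> carrier G \<Longrightarrow> y \<in> carrier G \<Longrightarrow> c (x,y) \<in> carrier M"
      by (auto simp: cochains_carrier)
    have "grp_d2 G M phi c = \<one>\<^bsub>G3\<^esub> \<longleftrightarrow> (\<forall>x\<in>carrier G \<times> carrier G \<times> carrier G. grp_d2 G M phi c x = \<one>\<^bsub>M\<^esub>)"
      by (subst ext_eq_iff[where A="carrier G \<times> carrier G \<times> carrier G"]) (auto simp: grp_d2_def)
    also have "\<dots> \<longleftrightarrow> (\<forall>k\<in>carrier G. \<forall>h\<in>carrier G. \<forall>g\<in>carrier G.
      c (k,h) \<otimes>\<^bsub>M\<^esub> c (k \<otimes>\<^bsub>G\<^esub> h, g) = c (k, h \<otimes>\<^bsub>G\<^esub> g) \<otimes>\<^bsub>M\<^esub> phi k (c (h,g)))"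
    proof -
      have pt: "grp_d2 G M phi c (k,h,g) = \<one>\<^bsub>M\<^esub> \<longleftrightarrow>
         c (k,h) \<otimes>\<^bsub>M\<^esub> c (k \<otimes>\<^bsub>G\<^esub> h, g) = c (k, h \<otimes>\<^bsub>G\<^esub> g) \<otimes>\<^bsub>M\<^esub> phi k (c (h,g))"
        if "k \<in> carrier G" "h \<in> carrier G" "g \<in> carrier G" for k h g
      proof -
        have "grp_d2 G M phi c (k,h,g) = \<one>\<^bsub>M\<^esub> \<longleftrightarrow>
          phi k (c (h,g)) \<otimes>\<^bsub>M\<^esub> c (k, h \<otimes>\<^bsub>G\<^esub> g) = c (k \<otimes>\<^bsub>G\<^esub> h, g) \<otimes>\<^bsub>M\<^esub> c (k,h)"
          using that by (simp add: grp_d2_def M.four_one cc)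
        also have "\<dots> \<longleftrightarrow> c (k,h) \<otimes>\<^bsub>M\<^esub> c (k \<otimes>\<^bsub>G\<^esub> h, g) = c (k, h \<otimes>\<^bsub>G\<^esub> g) \<otimes>\<^bsub>M\<^esub> phi k (c (h,g))"
          using that cc by (metis M.m_comm G.m_closed phi_closed)
        finally show ?thesis .
      qed
      show ?thesis using pt by auto
    qed
    finally have "grp_d2 G M phi c = \<one>\<^bsub>G3\<^esub> \<longleftrightarrow> (\<forall>k\<in>carrier G. \<forall>h\<in>carrier G. \<forall>g\<in>carrier G.
      c (k,h) \<otimes>\<^bsub>M\<^esub> c (k \<otimes>\<^bsub>G\<^esub> h, g) = c (k, h \<otimes>\<^bsub>G\<^esub> g) \<otimes>\<^bsub>M\<^esub> phi k (c (h,g)))" . }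
  then show ?thesis by blast
qed

lemma Z2_char: "c \<in> Z2 \<longleftrightarrow> c \<in> carrier C2 \<and> (\<forall>p\<in>carrier P. \<forall>n\<in>carrier P. \<forall>k\<in>carrier G. \<forall>m\<in>carrier P. \<forall>h\<in>carrier G. \<forall>g\<in>carrier G.
   c (p,k,h) \<otimes>\<^bsub>M\<^esub> c (n \<otimes>\<^bsub>P\<^esub> alpha k m, k \<otimes>\<^bsub>G\<^esub> h, g) = c (p \<otimes>\<^bsub>P\<^esub> n, k, h \<otimes>\<^bsub>G\<^esub> g) \<otimes>\<^bsub>M\<^esub> phi k (c (m,h,g)))"
proof -
  { assume c: "c \<in> carrier C2"
    then have cc: "\<And>x y z. x \<in> carrier P \<Longrightarrow> y \<in> carrier G \<Longrightarrow> z \<in> carrier G \<Longrightarrow> c (x,y,z) \<in> carrier M"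
      by (auto simp: cochains_carrier)
    have "xmod_d2 G P mu0 alpha M phi c = \<one>\<^bsub>C6\<^esub> \<longleftrightarrow> (\<forall>x\<in>D6. xmod_d2 G P mu0 alpha M phi c x = \<one>\<^bsub>M\<^esub>)"
      by (subst ext_eq_iff[where A=D6]) (auto simp: xmod_d2_def)
    also have "\<dots> \<longleftrightarrow> (\<forall>p\<in>carrier P. \<forall>n\<in>carrier P. \<forall>k\<in>carrier G. \<forall>m\<in>carrier P. \<forall>h\<in>carrier G. \<forall>g\<in>carrier G.
      c (p,k,h) \<otimes>\<^bsub>M\<^esub> c (n \<otimes>\<^bsub>P\<^esub> alpha k m, k \<otimes>\<^bsub>G\<^esub> h, g) = c (p \<otimes>\<^bsub>P\<^esub> n, k, h \<otimes>\<^bsub>G\<^esub> g) \<otimes>\<^bsub>M\<^esub> phi k (c (m,h,g)))"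
      by (auto simp: xmod_d2_def M.four_one cc)
    finally have "xmod_d2 G P mu0 alpha M phi c = \<one>\<^bsub>C6\<^esub> \<longleftrightarrow> (\<forall>p\<in>carrier P. \<forall>n\<in>carrier P. \<forall>k\<in>carrier G. \<forall>m\<in>carrier P. \<forall>h\<in>carrier G. \<forall>g\<in>carrier G.
      c (p,k,h) \<otimes>\<^bsub>M\<^esub> c (n \<otimes>\<^bsub>P\<^esub> alpha k m, k \<otimes>\<^bsub>G\<^esub> h, g) = c (p \<otimes>\<^bsub>P\<^esub> n, k, h \<otimes>\<^bsub>G\<^esub> g) \<otimes>\<^bsub>M\<^esub> phi k (c (m,h,g)))" . }
  then show ?thesis by (auto simp: xmod_Z2_def xmod_C2_def)
qed

end

context thm_ctx begin

lemma Z2_to: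
  assumes "c \<in> Z2"
  shows "phiOf c \<in> carrier EH" "fOf c \<in> Z2G" "c = rep (phiOf c) (fOf c)"
proof -
  let ?E = "\<one>\<^bsub>P\<^esub>" and ?I = "\<one>\<^bsub>G\<^esub>"
  have c: "c \<in> carrier C2" and cnd: "\<And>p n k m h g. p \<in> carrier P \<Longrightarrow> n\<in>carrier P \<Longrightarrow> k\<in>carrier G \<Longrightarrow> m\<in>carrier P \<Longrightarrow> h\<in>carrier G \<Longrightarrow> g\<in>carrier G \<Longrightarrow>
   c (p,k,h) \<otimes>\<^bsub>M\<^esub> c (n \<otimes>\<^bsub>P\<^esub> alpha k m, k \<otimes>\<^bsub>G\<^esub> h, g) = c (p \<otimes>\<^bsub>P\<^esub> n, k, h \<otimes>\<^bsub>G\<^esub> g) \<otimes>\<^bsub>M\<^esub> phi k (c (m,h,g))"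
    using assms Z2_char by auto
  have cc [simp]: "\<And>x y z. x \<in> carrier P \<Longrightarrow> y \<in> carrier G \<Longrightarrow> z \<in> carrier G \<Longrightarrow> c (x,y,z) \<in> carrier M"
    using c by (auto simp: cochains_carrier)
  have I: "c (p,k,h) \<otimes>\<^bsub>M\<^esub> c (?E, k \<otimes>\<^bsub>G\<^esub> h, g) = c (p, k, h \<otimes>\<^bsub>G\<^esub> g) \<otimes>\<^bsub>M\<^esub> phi k (c (?E,h,g))"
    if "p \<in> carrier P" "k \<in> carrier G" "h \<in> carrier G" "g \<in> carrier G" for p k h g
    using cnd[of p ?E k ?E h g] that by simp
  have X: "phi k (c (?E,?I,g)) = c (?E,k,?I)" if "k \<in> carrier G" "g \<in> carrier G" for k g
  proof -
    have "c (?E,k,?I) \<otimes>\<^bsub>M\<^esub> c (?E,k,g) = c (?E,k,g) \<otimes>\<^bsub>M\<^esub> phi k (c (?E,?I,g))"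
      using I[of ?E k ?I g] that by simp
    then have "c (?E,k,g) \<otimes>\<^bsub>M\<^esub> c (?E,k,?I) = c (?E,k,g) \<otimes>\<^bsub>M\<^esub> phi k (c (?E,?I,g))"
      using that by (simp add: M.m_comm)
    then show ?thesis using that M.l_cancel by (metis cc P.one_closed G.one_closed phi_closed)
  qed
  have A: "c (p,k,g) = c (p,k,?I) \<otimes>\<^bsub>M\<^esub> c (?E,k,g) \<otimes>\<^bsub>M\<^esub> inv\<^bsub>M\<^esub> c (?E,k,?I)"
    if "p \<in> carrier P" "k \<in> carrier G" "g \<in> carrier G" for p k g
  proof -
    have "c (p,k,?I) \<otimes>\<^bsub>M\<^esub> c (?E,k,g) = c (p,k,g) \<otimes>\<^bsub>M\<^esub> c (?E,k,?I)"
      using I[of p k ?I g] X[of k g] that by simp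
    then show ?thesis using that by (intro M.sol) auto
  qed
  have B: "c (n,h,?I) = c (n,?I,?I) \<otimes>\<^bsub>M\<^esub> c (?E,h,?I) \<otimes>\<^bsub>M\<^esub> inv\<^bsub>M\<^esub> c (?E,?I,?I)"
    if "n \<in> carrier P" "h \<in> carrier G" for n h
  proof -
    have "c (?E,?I,h) \<otimes>\<^bsub>M\<^esub> c (n,h,?I) = c (n,?I,h) \<otimes>\<^bsub>M\<^esub> c (?E,h,?I)"
      using cnd[of ?E n ?I ?E h ?I] that by simp
    then have "c (n,h,?I) \<otimes>\<^bsub>M\<^esub> c (?E,?I,h) = c (n,?I,h) \<otimes>\<^bsub>M\<^esub> c (?E,h,?I)"
      using that by (simp add: M.m_comm)
    then have "c (n,h,?I) = c (n,?I,h) \<otimes>\<^bsub>M\<^esub> c (?E,h,?I) \<otimes>\<^bsub>M\<^esub> inv\<^bsub>M\<^esub> c (?E,?I,h)"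
      using that by (intro M.sol) auto
    also have "\<dots> = c (n,?I,?I) \<otimes>\<^bsub>M\<^esub> c (?E,h,?I) \<otimes>\<^bsub>M\<^esub> inv\<^bsub>M\<^esub> c (?E,?I,?I)"
      using that by (subst A[of n ?I h]) (simp_all add: M.m_ac M.canc)
    finally show ?thesis .
  qed
  have R: "c (p,k,g) = c (?E,k,g) \<otimes>\<^bsub>M\<^esub> phiOf c p"
    if "p \<in> carrier P" "k \<in> carrier G" "g \<in> carrier G" for p k g
    using that by (subst A, simp_all, subst B, simp_all add: phiOf_def M.m_ac M.canc)
  have phc [simp]: "phiOf c p \<in> carrier M" if "p \<in> carrier P" for p
    using that by (simp add: phiOf_def)
  show "c = rep (phiOf c) (fOf c)"
  proof (rule extensionalityI[where A=D3])
    show "c \<in> extensional D3" using c by (simp add: cochains_carrier)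
    show "rep (phiOf c) (fOf c) \<in> extensional D3" by (simp add: rep_def)
    fix x assume "x \<in> D3"
    then obtain m h g where x: "x = (m,h,g)" "m \<in> carrier P" "h \<in> carrier G" "g \<in> carrier G" by auto
    show "c x = rep (phiOf c) (fOf c) x" using R[of m h g] x by (simp add: rep_def fOf_def)
  qed
  show "fOf c \<in> Z2G"
    unfolding Z2G_char
  proof (intro conjI ballI)
    show "fOf c \<in> carrier G2" by (auto simp: fOf_def cochains_carrier)
    fix k h g assume "k \<in> carrier G" "h \<in> carrier G" "g \<in> carrier G"
    then show "fOf c (k, h) \<otimes>\<^bsub>M\<^esub> fOf c (k \<otimes>\<^bsub>G\<^esub> h, g) = fOf c (k, h \<otimes>\<^bsub>G\<^esub> g) \<otimes>\<^bsub>M\<^esub> phi k (fOf c (h, g))"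
      using I[of ?E k h g] by (simp add: fOf_def)
  qed
  have hm: "phiOf c (p \<otimes>\<^bsub>P\<^esub> n) = phiOf c p \<otimes>\<^bsub>M\<^esub> phiOf c n" if "p \<in> carrier P" "n \<in> carrier P" for p n
  proof -
    have "c (p,?I,?I) \<otimes>\<^bsub>M\<^esub> c (n,?I,?I) = c (p \<otimes>\<^bsub>P\<^esub> n,?I,?I) \<otimes>\<^bsub>M\<^esub> c (?E,?I,?I)"
      using cnd[of p n ?I ?E ?I ?I] that by simp
    then have "c (p \<otimes>\<^bsub>P\<^esub> n,?I,?I) = c (p,?I,?I) \<otimes>\<^bsub>M\<^esub> c (n,?I,?I) \<otimes>\<^bsub>M\<^esub> inv\<^bsub>M\<^esub> c (?E,?I,?I)"
      using that by (intro M.sol) auto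
    then show ?thesis using that by (simp add: phiOf_def M.m_ac M.canc M.inv_mult)
  qed
  have eqv: "phiOf c (alpha k m) = phi k (phiOf c m)" if "k \<in> carrier G" "m \<in> carrier P" for k m
  proof -
    have "c (?E,k,?I) \<otimes>\<^bsub>M\<^esub> c (alpha k m,k,?I) = c (?E,k,?I) \<otimes>\<^bsub>M\<^esub> phi k (c (m,?I,?I))"
      using cnd[of ?E ?E k m ?I ?I] that by simp
    then have "c (alpha k m,k,?I) = phi k (c (m,?I,?I))"
      using that M.l_cancel by (metis cc P.one_closed G.one_closed phi_closed alpha_closed)
    then have "c (?E,k,?I) \<otimes>\<^bsub>M\<^esub> phiOf c (alpha k m) = phi k (c (?E,?I,?I) \<otimes>\<^bsub>M\<^esub> phiOf c m)"
      using that R[of "alpha k m" k ?I] R[of m ?I ?I] by simp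
    also have "\<dots> = c (?E,k,?I) \<otimes>\<^bsub>M\<^esub> phi k (phiOf c m)"
      using that X[of k ?I] by (simp add: phi_mult)
    finally show ?thesis using that M.l_cancel by (metis cc P.one_closed G.one_closed phi_closed alpha_closed phc)
  qed
  show "phiOf c \<in> carrier EH"
    unfolding EH_carrier using hm eqv by (auto simp: hom_def phiOf_def)
qed

end

context thm_ctx begin

lemma EH_hom: "\<phi> \<in> carrier EH \<Longrightarrow> group_hom P M \<phi>"
  by (auto simp: EH_carrier group_hom_def group_hom_axioms_def P.group_axioms M.group_axioms)

lemma EH_one: "\<phi> \<in> carrier EH \<Longrightarrow> \<phi> \<one>\<^bsub>P\<^esub> = \<one>\<^bsub>M\<^esub>"
  using group_hom.hom_one[OF EH_hom] by blast

lemma EH_closed: "\<phi> \<in> carrier EH \<Longrightarrow> p \<in> carrier P \<Longrightarrow> \<phi> p \<in> carrier M"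
  by (auto simp: EH_carrier hom_def)

lemma rep_Z2:
  assumes ph: "\<phi> \<in> carrier EH" and f: "f \<in> Z2G"
  shows "rep \<phi> f \<in> Z2"
proof -
  have fc: "f (x,y) \<in> carrier M" if "x \<in> carrier G" "y \<in> carrier G" for x y
    using f that by (auto simp: cochains_carrier)
  have fcoc: "f (k,h) \<otimes>\<^bsub>M\<^esub> f (k \<otimes>\<^bsub>G\<^esub> h, g) = f (k, h \<otimes>\<^bsub>G\<^esub> g) \<otimes>\<^bsub>M\<^esub> phi k (f (h,g))"
    if "k \<in> carrier G" "h \<in> carrier G" "g \<in> carrier G" for k h g
    using f that unfolding Z2G_char by blast
  have pc: "\<phi> p \<in> carrier M" if "p \<in> carrier P" for p using EH_closed[OF ph that] .
  have pm: "\<phi> (p \<otimes>\<^bsub>P\<^esub> n) = \<phi> p \<otimes>\<^bsub>M\<^esub> \<phi> n" if "p \<in> carrier P" "n \<in> carrier P" for p n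
    using ph that by (auto simp: EH_carrier hom_def)
  have pe: "\<phi> (alpha k m) = phi k (\<phi> m)" if "k \<in> carrier G" "m \<in> carrier P" for k m
    using ph that by (auto simp: EH_carrier)
  show ?thesis unfolding Z2_char
  proof (intro conjI ballI)
    show "rep \<phi> f \<in> carrier C2" by (auto simp: rep_def cochains_carrier fc pc)
    fix p n k m h g assume x: "p \<in> carrier P" "n \<in> carrier P" "k \<in> carrier G" "m \<in> carrier P" "h \<in> carrier G" "g \<in> carrier G"
    have "rep \<phi> f (p, k, h) \<otimes>\<^bsub>M\<^esub> rep \<phi> f (n \<otimes>\<^bsub>P\<^esub> alpha k m, k \<otimes>\<^bsub>G\<^esub> h, g)
      = (f (k,h) \<otimes>\<^bsub>M\<^esub> f (k \<otimes>\<^bsub>G\<^esub> h, g)) \<otimes>\<^bsub>M\<^esub> (\<phi> p \<otimes>\<^bsub>M\<^esub> \<phi> n \<otimes>\<^bsub>M\<^esub> phi k (\<phi> m))"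
      using x by (simp add: rep_def pm pe fc pc M.m_ac)
    also have "\<dots> = (f (k, h \<otimes>\<^bsub>G\<^esub> g) \<otimes>\<^bsub>M\<^esub> phi k (f (h,g))) \<otimes>\<^bsub>M\<^esub> (\<phi> p \<otimes>\<^bsub>M\<^esub> \<phi> n \<otimes>\<^bsub>M\<^esub> phi k (\<phi> m))"
      using x fcoc by simp
    also have "\<dots> = rep \<phi> f (p \<otimes>\<^bsub>P\<^esub> n, k, h \<otimes>\<^bsub>G\<^esub> g) \<otimes>\<^bsub>M\<^esub> phi k (rep \<phi> f (m, h, g))"
      using x by (simp add: rep_def pm pe fc pc M.m_ac phi_mult)
    finally show "rep \<phi> f (p, k, h) \<otimes>\<^bsub>M\<^esub> rep \<phi> f (n \<otimes>\<^bsub>P\<^esub> alpha k m, k \<otimes>\<^bsub>G\<^esub> h, g) =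
       rep \<phi> f (p \<otimes>\<^bsub>P\<^esub> n, k, h \<otimes>\<^bsub>G\<^esub> g) \<otimes>\<^bsub>M\<^esub> phi k (rep \<phi> f (m, h, g))" .
  qed
qed

lemma phiOf_rep: assumes ph: "\<phi> \<in> carrier EH" and f: "f \<in> carrier G2"
  shows "phiOf (rep \<phi> f) = \<phi>"
proof -
  have fc: "f (x,y) \<in> carrier M" if "x \<in> carrier G" "y \<in> carrier G" for x y
    using f that by (auto simp: cochains_carrier)
  show ?thesis
    using ph by (intro extensionalityI[where A="carrier P"])
      (auto simp: phiOf_def rep_def EH_one fc EH_closed EH_carrier M.m_ac M.canc)
qed

lemma fOf_rep: assumes ph: "\<phi> \<in> carrier EH" and f: "f \<in> carrier G2"
  shows "fOf (rep \<phi> f) = f"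
proof -
  have fc: "f (x,y) \<in> carrier M" if "x \<in> carrier G" "y \<in> carrier G" for x y
    using f that by (auto simp: cochains_carrier)
  show ?thesis
    using ph f by (intro extensionalityI[where A="carrier G \<times> carrier G"])
      (auto simp: fOf_def rep_def EH_one fc cochains_carrier)
qed

end

context thm_ctx begin

abbreviation "B2 \<equiv> xmod_B2 G P mu0 M phi"
abbreviation "B2G \<equiv> grp_d1 G M phi ` carrier C1"
abbreviation "Z \<equiv> C2\<lparr>carrier := Z2\<rparr>"
abbreviation "ZG \<equiv> G2\<lparr>carrier := Z2G\<rparr>"
abbreviation "H2G \<equiv> ZG Mod B2G"
abbreviation "one_EH \<equiv> (\<lambda>x\<in>carrier P. \<one>\<^bsub>M\<^esub>)"

lemma Z2_sub: "subgroup Z2 C2"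
proof -
  interpret gh: group_hom C2 C6 "xmod_d2 G P mu0 alpha M phi"
    by (auto simp: group_hom_def group_hom_axioms_def xmod_d2_hom comm_group.axioms(2)[OF cg])
  show ?thesis using gh.subgroup_kernel by (simp add: kernel_def xmod_Z2_def xmod_C2_def)
qed

lemma Z2G_sub: "subgroup Z2G G2"
proof -
  interpret gh: group_hom G2 G3 "grp_d2 G M phi"
    by (auto simp: group_hom_def group_hom_axioms_def grp_d2_hom comm_group.axioms(2)[OF cg])
  show ?thesis using gh.subgroup_kernel by (simp add: kernel_def)
qed

lemma B2_sub0: "subgroup B2 C2"
proof -
  interpret gh: group_hom C1 C2 "xmod_d1 G P mu0 M phi"
    by (auto simp: group_hom_def group_hom_axioms_def xmod_d1_hom comm_group.axioms(2)[OF cg])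
  show ?thesis using gh.img_is_subgroup by (simp add: xmod_B2_def)
qed

lemma B2G_sub0: "subgroup B2G G2"
proof -
  interpret gh: group_hom C1 G2 "grp_d1 G M phi"
    by (auto simp: group_hom_def group_hom_axioms_def grp_d1_hom comm_group.axioms(2)[OF cg])
  show ?thesis using gh.img_is_subgroup by simp
qed

lemma one_EH_in: "one_EH \<in> carrier EH"
  by (auto simp: EH_carrier hom_def)

lemma d1_carrier: "b \<in> carrier C1 \<Longrightarrow> grp_d1 G M phi b \<in> carrier G2"
  using grp_d1_hom by (auto simp: hom_def)

lemma B2G_Z2G: "B2G \<subseteq> Z2G"
  using dd_grp d1_carrier by auto

lemma d1_rep: assumes b: "b \<in> carrier C1"
  shows "xmod_d1 G P mu0 M phi b = rep one_EH (grp_d1 G M phi b)"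
proof -
  have bc: "\<And>y. y \<in> carrier G \<Longrightarrow> b y \<in> carrier M" using b by (auto simp: cochains_carrier)
  show ?thesis
    by (intro extensionalityI[where A=D3]) (auto simp: xmod_d1_def rep_def grp_d1_def bc M.m_ac)
qed

lemma B2_Z2: "B2 \<subseteq> Z2"
  using d1_rep rep_Z2[OF one_EH_in] dd_grp d1_carrier by (auto simp: xmod_B2_def)

lemma Z_cg: "comm_group Z"
proof -
  interpret C: comm_group C2 by (rule cg)
  have "group Z" by (rule subgroup.subgroup_is_group[OF Z2_sub C.is_group])
  then show ?thesis
  proof (rule group.group_comm_groupI)
    fix x y assume "x \<in> carrier Z" "y \<in> carrier Z"
    then have "x \<in> carrier C2" "y \<in> carrier C2" using subgroup.subset[OF Z2_sub] by auto
    then have "x \<otimes>\<^bsub>C2\<^esub> y = y \<otimes>\<^bsub>C2\<^esub> x" by (rule C.m_comm)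
    then show "x \<otimes>\<^bsub>Z\<^esub> y = y \<otimes>\<^bsub>Z\<^esub> x" by simp
  qed
qed

lemma ZG_cg: "comm_group ZG"
proof -
  interpret C: comm_group G2 by (rule cg)
  have "group ZG" by (rule subgroup.subgroup_is_group[OF Z2G_sub C.is_group])
  then show ?thesis
  proof (rule group.group_comm_groupI)
    fix x y assume "x \<in> carrier ZG" "y \<in> carrier ZG"
    then have "x \<in> carrier G2" "y \<in> carrier G2" using subgroup.subset[OF Z2G_sub] by auto
    then have "x \<otimes>\<^bsub>G2\<^esub> y = y \<otimes>\<^bsub>G2\<^esub> x" by (rule C.m_comm)
    then show "x \<otimes>\<^bsub>ZG\<^esub> y = y \<otimes>\<^bsub>ZG\<^esub> x" by simp
  qed
qed

lemma B2_normal: "B2 \<lhd> Z"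
proof -
  interpret C: comm_group C2 by (rule cg)
  interpret ZZ: comm_group Z by (rule Z_cg)
  show ?thesis using C.subgroup_incl[OF B2_sub0 Z2_sub B2_Z2] ZZ.subgroup_imp_normal by blast
qed

lemma B2G_normal: "B2G \<lhd> ZG"
proof -
  interpret C: comm_group G2 by (rule cg)
  interpret ZZ: comm_group ZG by (rule ZG_cg)
  show ?thesis using C.subgroup_incl[OF B2G_sub0 Z2G_sub B2G_Z2G] ZZ.subgroup_imp_normal by blast
qed

lemma EH_group: "group EH"
proof -
  interpret C: comm_group "cochains (carrier P) M" by (rule cg)
  have "subgroup (carrier EH) (cochains (carrier P) M)"
  proof (rule C.subgroupI)
    show "carrier EH \<subseteq> carrier (cochains (carrier P) M)"
      by (auto simp: EH_carrier cochains_carrier hom_def)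
    show "carrier EH \<noteq> {}" using one_EH_in by blast
  next
    fix a assume a: "a \<in> carrier EH"
    then have ac: "a \<in> carrier (cochains (carrier P) M)" by (auto simp: EH_carrier cochains_carrier hom_def)
    have cl: "\<And>p. p \<in> carrier P \<Longrightarrow> a p \<in> carrier M" using EH_closed[OF a] .
    show "inv\<^bsub>cochains (carrier P) M\<^esub> a \<in> carrier EH"
      using a cl unfolding cochains_inv[OF M.comm_group_axioms ac]
      by (auto simp: EH_carrier hom_def M.inv_mult)
  next
    fix a b assume a: "a \<in> carrier EH" and b: "b \<in> carrier EH"
    have cl: "\<And>p. p \<in> carrier P \<Longrightarrow> a p \<in> carrier M" using EH_closed[OF a] .
    have cl2: "\<And>p. p \<in> carrier P \<Longrightarrow> b p \<in> carrier M" using EH_closed[OF b] .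
    show "a \<otimes>\<^bsub>cochains (carrier P) M\<^esub> b \<in> carrier EH"
      using a b cl cl2 by (auto simp: EH_carrier hom_def M.m_ac phi_mult)
  qed
  then have "group ((cochains (carrier P) M)\<lparr>carrier := carrier EH\<rparr>)"
    by (rule subgroup.subgroup_is_group) (rule C.is_group)
  moreover have "(cochains (carrier P) M)\<lparr>carrier := carrier EH\<rparr> = EH"
    by (simp add: equiv_Hom_def)
  ultimately show ?thesis by simp
qed

end

context thm_ctx begin

definition "Psi c = (phiOf c, B2G #>\<^bsub>ZG\<^esub> fOf c)"

lemma Z2_C2: "c \<in> Z2 \<Longrightarrow> c \<in> carrier C2"
  using subgroup.subset[OF Z2_sub] by auto

lemma phiOf_mult: assumes "c \<in> Z2" "c' \<in> Z2"
  shows "phiOf (c \<otimes>\<^bsub>C2\<^esub> c') = phiOf c \<otimes>\<^bsub>EH\<^esub> phiOf c'"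
proof -
  have cc: "\<And>x. x \<in> D3 \<Longrightarrow> c x \<in> carrier M" "\<And>x. x \<in> D3 \<Longrightarrow> c' x \<in> carrier M"
    using Z2_C2[OF assms(1)] Z2_C2[OF assms(2)] by (auto simp: cochains_carrier)
  show ?thesis
    by (intro extensionalityI[where A="carrier P"])
      (auto simp: phiOf_def equiv_Hom_def cc M.inv_mult M.m_ac)
qed

lemma fOf_mult: "fOf (c \<otimes>\<^bsub>C2\<^esub> c') = fOf c \<otimes>\<^bsub>G2\<^esub> fOf c'"
  by (intro extensionalityI[where A="carrier G \<times> carrier G"]) (auto simp: fOf_def)

lemma coset_hom: "(\<lambda>a. B2G #>\<^bsub>ZG\<^esub> a) \<in> hom ZG H2G"
  using normal.r_coset_hom_Mod[OF B2G_normal] .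

lemma Psi_hom: "Psi \<in> hom Z (EH \<times>\<times> H2G)"
proof -
  have cl: "Psi c \<in> carrier (EH \<times>\<times> H2G)" if "c \<in> Z2" for c
  proof -
    have "fOf c \<in> carrier ZG" using Z2_to(2)[OF that] by simp
    then have "B2G #>\<^bsub>ZG\<^esub> fOf c \<in> carrier H2G" using coset_hom by (auto simp: hom_def)
    then show ?thesis using Z2_to(1)[OF that] by (simp add: Psi_def)
  qed
  show ?thesis unfolding hom_def
  proof (safe)
    fix c assume "c \<in> carrier Z" then show "Psi c \<in> carrier (EH \<times>\<times> H2G)" using cl by simp
  next
    fix c c' assume c: "c \<in> carrier Z" and c': "c' \<in> carrier Z"
    have f: "fOf c \<in> carrier ZG" "fOf c' \<in> carrier ZG" using Z2_to(2) c c' by auto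
    have "B2G #>\<^bsub>ZG\<^esub> (fOf c \<otimes>\<^bsub>ZG\<^esub> fOf c') = (B2G #>\<^bsub>ZG\<^esub> fOf c) \<otimes>\<^bsub>H2G\<^esub> (B2G #>\<^bsub>ZG\<^esub> fOf c')"
      using coset_hom f unfolding hom_def by blast
    moreover have "phiOf (c \<otimes>\<^bsub>Z\<^esub> c') = phiOf c \<otimes>\<^bsub>EH\<^esub> phiOf c'"
      using phiOf_mult[of c c'] c c' by simp
    moreover have "fOf (c \<otimes>\<^bsub>Z\<^esub> c') = fOf c \<otimes>\<^bsub>ZG\<^esub> fOf c'"
      using fOf_mult[of c c'] by simp
    ultimately show "Psi (c \<otimes>\<^bsub>Z\<^esub> c') = Psi c \<otimes>\<^bsub>EH \<times>\<times> H2G\<^esub> Psi c'"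
      by (simp only: Psi_def mult_DirProd)
  qed
qed

lemma Psi_surj: "Psi ` carrier Z = carrier (EH \<times>\<times> H2G)"
proof
  show "Psi ` carrier Z \<subseteq> carrier (EH \<times>\<times> H2G)" using Psi_hom unfolding hom_def Pi_def by blast
next
  show "carrier (EH \<times>\<times> H2G) \<subseteq> Psi ` carrier Z"
  proof
    fix y assume "y \<in> carrier (EH \<times>\<times> H2G)"
    then obtain ph0 XX where y: "y = (ph0, XX)" and ph: "ph0 \<in> carrier EH" and X: "XX \<in> carrier H2G" by auto
    from X obtain f where f: "f \<in> Z2G" and Xf: "XX = B2G #>\<^bsub>ZG\<^esub> f"
      unfolding carrier_FactGroup by auto
    have fG2: "f \<in> carrier G2" using f by simp
    have "rep ph0 f \<in> carrier Z" using rep_Z2[OF ph f] by simp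
    moreover have "Psi (rep ph0 f) = y"
      using y Xf by (simp add: Psi_def phiOf_rep[OF ph fG2] fOf_rep[OF ph fG2])
    ultimately show "y \<in> Psi ` carrier Z" by blast
  qed
qed

lemma Psi_kernel: "kernel Z (EH \<times>\<times> H2G) Psi = B2"
proof
  interpret ZGg: group ZG using ZG_cg comm_group.axioms(2) by blast
  have B2Gs: "subgroup B2G ZG" using B2G_normal normal_imp_subgroup by blast
  have oneEH: "\<one>\<^bsub>EH\<^esub> = one_EH" by (simp add: equiv_Hom_def)
  have oneH: "\<one>\<^bsub>EH \<times>\<times> H2G\<^esub> = (one_EH, B2G)" by (simp only: one_DirProd oneEH one_FactGroup)
  show "kernel Z (EH \<times>\<times> H2G) Psi \<subseteq> B2"
  proof
    fix c assume "c \<in> kernel Z (EH \<times>\<times> H2G) Psi"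
    then have c0: "c \<in> carrier Z" and eq: "Psi c = (one_EH, B2G)" unfolding kernel_def oneH by auto
    have c: "c \<in> Z2" using c0 by simp
    have ph: "phiOf c = one_EH" and cos: "B2G #>\<^bsub>ZG\<^esub> fOf c = B2G"
      using eq unfolding Psi_def by simp_all
    have fc: "fOf c \<in> carrier ZG" using Z2_to(2)[OF c] by simp
    have "fOf c \<in> B2G #>\<^bsub>ZG\<^esub> fOf c" by (rule ZGg.rcos_self[OF fc B2Gs])
    then have "fOf c \<in> B2G" using cos by simp
    then obtain b where b: "b \<in> carrier C1" and fb: "fOf c = grp_d1 G M phi b" by auto
    have "c = rep (phiOf c) (fOf c)" using Z2_to(3)[OF c] .
    also have "\<dots> = rep one_EH (grp_d1 G M phi b)" by (simp only: ph fb)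
    also have "\<dots> = xmod_d1 G P mu0 M phi b" using d1_rep[OF b] by simp
    finally have "c = xmod_d1 G P mu0 M phi b" .
    then show "c \<in> B2" using b unfolding xmod_B2_def by blast
  qed
  show "B2 \<subseteq> kernel Z (EH \<times>\<times> H2G) Psi"
  proof
    fix c assume cB: "c \<in> B2"
    then obtain b where b: "b \<in> carrier C1" and cb: "c = xmod_d1 G P mu0 M phi b"
      unfolding xmod_B2_def by blast
    have c: "c \<in> Z2" using B2_Z2 cB by blast
    have cr: "c = rep one_EH (grp_d1 G M phi b)" using cb d1_rep[OF b] by simp
    have d: "grp_d1 G M phi b \<in> carrier G2" using d1_carrier[OF b] .
    have db: "grp_d1 G M phi b \<in> B2G" using b by blast
    have co: "B2G #>\<^bsub>ZG\<^esub> grp_d1 G M phi b = B2G"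
      by (rule subgroup.rcos_const[OF B2Gs ZGg.group_axioms db])
    have "Psi c = (one_EH, B2G)"
      unfolding Psi_def cr phiOf_rep[OF one_EH_in d] fOf_rep[OF one_EH_in d] co ..
    then show "c \<in> kernel Z (EH \<times>\<times> H2G) Psi"
      using c unfolding kernel_def oneH by simp
  qed
qed

lemma main_iso: "Z Mod B2 \<cong> EH \<times>\<times> H2G"
proof -
  have gZ: "group Z" using Z_cg comm_group.axioms(2) by blast
  have gH: "group (EH \<times>\<times> H2G)"
    by (rule DirProd_group[OF EH_group normal.factorgroup_is_group[OF B2G_normal]])
  interpret gh: group_hom Z "EH \<times>\<times> H2G" Psi
    using gZ gH Psi_hom by (auto simp: group_hom_def group_hom_axioms_def)
  show ?thesis using gh.FactGroup_iso[OF Psi_surj] Psi_kernel by simp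
qed

end

theorem mainTheorem16:
  fixes Pi0 :: "('g,'x) monoid_scheme" and Pi1 :: "('p,'z) monoid_scheme"
    and M :: "('m,'y) monoid_scheme"
    and alpha :: "'g \<Rightarrow> 'p \<Rightarrow> 'p" and phi :: "'g \<Rightarrow> 'm \<Rightarrow> 'm"
  assumes "group Pi0"
    and "G_module Pi0 Pi1 alpha"
    and "G_module Pi0 M phi"
  shows "xmod_H2 Pi0 Pi1 (\<lambda>_. \<one>\<^bsub>Pi0\<^esub>) alpha M phi
           \<cong> (equiv_Hom Pi0 Pi1 alpha M phi \<times>\<times> grp_H2 Pi0 M phi)"
proof -
  have cP: "comm_group Pi1" using assms(2) by (simp add: G_module_def)
  have cM: "comm_group M" using assms(3) by (simp add: G_module_def)
  interpret T: thm_ctx Pi0 Pi1 M alpha phi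
    by (intro thm_ctx.intro thm_ctx_axioms.intro assms cP cM)
  show ?thesis using T.main_iso unfolding xmod_H2_def xmod_C2_def grp_H2_def by simp
qed

end
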